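(* Let $G$ be a cograph. A coloring $\sigma$ of $G$ is recursively minimal if and only if it is an hc-coloring.
   Context: All graphs are finite, simple and undirected. A (proper vertex) coloring of $G=(V,E)$ is a surjective map $\sigma:V\to S$ with $\sigma(x)\neq\sigma(y)$ whenever $xy\in E$; $\chi(G)$ is the chromatic number. A cograph is a graph that is $K_1$, or a disjoint union of cographs, or a join of cographs. Color-minimal cographs are colored graphs $(G,\sigma)$ ($\sigma$ a proper coloring) defined recursively: $(G,\sigma)$ is color-minimal if $|\sigma(V)|=\chi(G)$ and either $G=K_1$, or $G$ is the disjoint union, or the join, of at least two graphs $G_i$ such that each $(G_i,\sigma|_{V(G_i)})$ is a color-minimal cograph. A coloring $\sigma$ of $G$ is recursively minimal if $(G,\sigma)$ is a color-minimal cograph. A cotree $(T,t)$ of a cograph $G$ is a rooted tree $T$ with leaf set $V$ and a labeling $t:V^0(T)\to\{0,1\}$ of its inner vertices such that for every inner vertex $u$, $G(u):=G[L(T(u))]$ (with $L(T(u))$ the leaves descending from $u$) is the disjoint union (if $t(u)=0$) or the join (if $t(u)=1$) of the graphs $G(v)$, $v$ a child of $u$. It is binary if every inner vertex has exactly two children. A coloring $\sigma$ is an hc-coloring with respect to a binary cotree $(T,t)$ if for every inner vertex $u$ with children $v_1,v_2$: if $t(u)=1$ then $\sigma(L(T(v_1)))\cap\sigma(L(T(v_2)))=\emptyset$, and if $t(u)=0$ then one of $\sigma(L(T(v_1)))$, $\sigma(L(T(v_2)))$ contains the other. A coloring of $G$ is an hc-coloring of $G$ if it is an hc-coloring with respect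 to some binary cotree of $G$. *)

theory Defs
  imports Main "HOL-Library.Disjoint_Sets"
begin

text \<open>A graph is a pair (V, E) with vertex set V and edge set E consisting of
  two-element sets {x,y} (simple, undirected).\<close>
type_synonym 'a graph = "'a set \<times> 'a set set"

definition induced_edges :: "'a set set \<Rightarrow> 'a set \<Rightarrow> 'a set set" where
  "induced_edges E W = {e \<in> E. e \<subseteq> W}"

definition gunion :: "'a graph \<Rightarrow> 'a graph \<Rightarrow> 'a graph" where
  "gunion G1 G2 = (fst G1 \<union> fst G2, snd G1 \<union> snd G2)"

definition gjoin :: "'a graph \<Rightarrow> 'a graph \<Rightarrow> 'a graph" where
  "gjoin G1 G2 = (fst G1 \<union> fst G2,
     snd G1 \<union> snd G2 \<union> {{x, y} | x y. x \<in> fst G1 \<and> y \<in> fst G2})"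

text \<open>Cographs: K1, disjoint unions and joins of cographs (binary suffices,
  since a union/join of at least two is an iterated binary one).\<close>
inductive cograph :: "'a graph \<Rightarrow> bool" where
  K1: "cograph ({v}, {})"
| union: "\<lbrakk>cograph G1; cograph G2; fst G1 \<inter> fst G2 = {}\<rbrakk> \<Longrightarrow> cograph (gunion G1 G2)"
| join: "\<lbrakk>cograph G1; cograph G2; fst G1 \<inter> fst G2 = {}\<rbrakk> \<Longrightarrow> cograph (gjoin G1 G2)"

definition proper_coloring :: "'a graph \<Rightarrow> ('a \<Rightarrow> 'c) \<Rightarrow> bool" where
  "proper_coloring G \<sigma> \<longleftrightarrow> (\<forall>x\<in>fst G. \<forall>y\<in>fst G. {x, y} \<in> snd G \<longrightarrow> \<sigma> x \<noteq> \<sigma> y)"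

definition chi :: "'a graph \<Rightarrow> nat" where
  "chi G = (LEAST k. \<exists>f :: 'a \<Rightarrow> nat. proper_coloring G f \<and> f ` fst G \<subseteq> {..<k})"

text \<open>The decomposition into at least two graphs G_i
  is a partition P of V (card P \<ge> 2) with G_i = G[W], W \<in> P; G is their disjoint
  union (no edges between distinct parts) or their join (all edges between
  distinct parts).\<close>
definition cross_edges :: "'a set set \<Rightarrow> 'a set set" where
  "cross_edges P = {{x, y} | x y. \<exists>W1\<in>P. \<exists>W2\<in>P. W1 \<noteq> W2 \<and> x \<in> W1 \<and> y \<in> W2}"

inductive color_minimal :: "'a graph \<Rightarrow> ('a \<Rightarrow> 'c) \<Rightarrow> bool" where
  cm_K1: "\<lbrakk>proper_coloring (V, E) \<sigma>; card (\<sigma> ` V) = chi (V, E); V = {v}; E = {}\<rbrakk>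
     \<Longrightarrow> color_minimal (V, E) \<sigma>"
| cm_union: "\<lbrakk>proper_coloring (V, E) \<sigma>; card (\<sigma> ` V) = chi (V, E);
     partition_on V P; finite P; card P \<ge> 2;
     E = (\<Union>W\<in>P. induced_edges E W);
     \<forall>W\<in>P. color_minimal (W, induced_edges E W) \<sigma>\<rbrakk>
     \<Longrightarrow> color_minimal (V, E) \<sigma>"
| cm_join: "\<lbrakk>proper_coloring (V, E) \<sigma>; card (\<sigma> ` V) = chi (V, E);
     partition_on V P; finite P; card P \<ge> 2;
     E = (\<Union>W\<in>P. induced_edges E W) \<union> cross_edges P;
     \<forall>W\<in>P. color_minimal (W, induced_edges E W) \<sigma>\<rbrakk>
     \<Longrightarrow> color_minimal (V, E) \<sigma>"

definition recursively_minimal :: "'a graph \<Rightarrow> ('a \<Rightarrow> 'c) \<Rightarrow> bool" where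
  "recursively_minimal G \<sigma> \<longleftrightarrow> color_minimal G \<sigma>"

text \<open>Binary cotrees: inner nodes labelled True (=1, join) or False (=0, union).\<close>
datatype 'a bcotree = BLeaf 'a | BNode bool "'a bcotree" "'a bcotree"

fun leafset :: "'a bcotree \<Rightarrow> 'a set" where
  "leafset (BLeaf v) = {v}"
| "leafset (BNode b l r) = leafset l \<union> leafset r"

text \<open>Cotree condition at every inner node u with children l, r: the leaf sets
  are disjoint (each vertex is exactly one leaf) and G(u) = G[L(u)] is the
  disjoint union (label False) resp. join (label True) of G(l) and G(r).\<close>
fun cotree_ok :: "'a set set \<Rightarrow> 'a bcotree \<Rightarrow> bool" where
  "cotree_ok E (BLeaf v) = True"
| "cotree_ok E (BNode b l r) = (cotree_ok E l \<and> cotree_ok E r \<and>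
     leafset l \<inter> leafset r = {} \<and>
     induced_edges E (leafset l \<union> leafset r) =
       (if b then induced_edges E (leafset l) \<union> induced_edges E (leafset r)
                  \<union> {{x, y} | x y. x \<in> leafset l \<and> y \<in> leafset r}
        else induced_edges E (leafset l) \<union> induced_edges E (leafset r)))"

definition binary_cotree :: "'a graph \<Rightarrow> 'a bcotree \<Rightarrow> bool" where
  "binary_cotree G T \<longleftrightarrow> leafset T = fst G \<and> cotree_ok (snd G) T"

fun hc_wrt :: "'a bcotree \<Rightarrow> ('a \<Rightarrow> 'c) \<Rightarrow> bool" where
  "hc_wrt (BLeaf v) \<sigma> = True"
| "hc_wrt (BNode b l r) \<sigma> = (hc_wrt l \<sigma> \<and> hc_wrt r \<sigma> \<and>
     (if b then \<sigma> ` leafset l \<inter> \<sigma> ` leafset r = {}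
      else \<sigma> ` leafset l \<subseteq> \<sigma> ` leafset r \<or> \<sigma> ` leafset r \<subseteq> \<sigma> ` leafset l))"

definition hc_coloring :: "'a graph \<Rightarrow> ('a \<Rightarrow> 'c) \<Rightarrow> bool" where
  "hc_coloring G \<sigma> \<longleftrightarrow> proper_coloring G \<sigma> \<and> (\<exists>T. binary_cotree G T \<and> hc_wrt T \<sigma>)"

end

theory Submission
  imports Defs
begin


lemma chi_witness:
  assumes "finite V" "proper_coloring (V,E) \<sigma>"
  shows "\<exists>f::'a\<Rightarrow>nat. proper_coloring (V,E) f \<and> f ` V \<subseteq> {..<card (\<sigma> ` V)}"
proof -
  obtain h where h: "bij_betw h (\<sigma> ` V) {0..<card (\<sigma> ` V)}"
    using ex_bij_betw_finite_nat assms(1) finite_imageI by blast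
  have "proper_coloring (V,E) (h \<circ> \<sigma>)"
    using assms(2) h unfolding proper_coloring_def bij_betw_def inj_on_def by auto
  moreover have "(h \<circ> \<sigma>) ` V \<subseteq> {..<card (\<sigma> ` V)}"
    using h unfolding bij_betw_def by auto
  ultimately show ?thesis by blast
qed

lemma chi_le_card:
  assumes "finite V" "proper_coloring (V,E) \<sigma>"
  shows "chi (V,E) \<le> card (\<sigma> ` V)"
  using chi_witness[OF assms] unfolding chi_def by (auto intro: Least_le)

lemma chi_opt:
  assumes "finite V" "proper_coloring (V,E) \<sigma>"
  shows "\<exists>f::'a\<Rightarrow>nat. proper_coloring (V,E) f \<and> f ` V \<subseteq> {..<chi (V,E)}"
proof -
  have "\<exists>k. \<exists>f::'a\<Rightarrow>nat. proper_coloring (V,E) f \<and> f ` fst (V,E) \<subseteq> {..<k}"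
    using chi_witness[OF assms] by auto
  from LeastI_ex[OF this] show ?thesis unfolding chi_def by simp
qed

lemma proper_restrict:
  "proper_coloring (V,E) f \<Longrightarrow> W \<subseteq> V \<Longrightarrow> proper_coloring (W, induced_edges E W) f"
  unfolding proper_coloring_def induced_edges_def by auto

lemma induced_induced: "W \<subseteq> V \<Longrightarrow> induced_edges (induced_edges E V) W = induced_edges E W"
  unfolding induced_edges_def by auto

lemma chi_mono:
  assumes "finite V" "proper_coloring (V,E) \<sigma>" "W \<subseteq> V"
  shows "chi (W, induced_edges E W) \<le> chi (V,E)"
proof -
  obtain f :: "'a \<Rightarrow> nat" where f: "proper_coloring (V,E) f" "f ` V \<subseteq> {..<chi (V,E)}"
    using chi_opt[OF assms(1,2)] by blast
  have "proper_coloring (W, induced_edges E W) f" using proper_restrict[OF f(1) assms(3)] .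
  moreover have "f ` W \<subseteq> {..<chi (V,E)}" using f(2) assms(3) by auto
  ultimately show ?thesis unfolding chi_def by (auto intro: Least_le)
qed

lemma chi_pos:
  assumes "finite V" "proper_coloring (V,E) \<sigma>" "V \<noteq> {}"
  shows "chi (V,E) > 0"
proof -
  obtain f :: "'a \<Rightarrow> nat" where f: "proper_coloring (V,E) f" "f ` V \<subseteq> {..<chi (V,E)}"
    using chi_opt[OF assms(1,2)] by blast
  then show ?thesis using assms(3) by (metis empty_subsetI gr0I image_is_empty lessThan_0 subset_antisym)
qed

lemma cm_card: "color_minimal G \<sigma> \<Longrightarrow> card (\<sigma> ` fst G) = chi G \<and> proper_coloring G \<sigma>"
  by (induction rule: color_minimal.induct) auto

lemma cograph_props:
  "cograph G \<Longrightarrow> finite (fst G) \<and> fst G \<noteq> {} \<and>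
     (\<forall>e\<in>snd G. \<exists>x y. x \<noteq> y \<and> x \<in> fst G \<and> y \<in> fst G \<and> e = {x,y})"
proof (induction rule: cograph.induct)
  case (K1 v)
  then show ?case by auto
next
  case (union G1 G2)
  show ?case unfolding gunion_def fst_conv snd_conv
  proof (intro conjI ballI)
    fix e assume "e \<in> snd G1 \<union> snd G2"
    then show "\<exists>x y. x \<noteq> y \<and> x \<in> fst G1 \<union> fst G2 \<and> y \<in> fst G1 \<union> fst G2 \<and> e = {x,y}"
    proof
      assume "e \<in> snd G1"
      then obtain x y where "x \<noteq> y \<and> x \<in> fst G1 \<and> y \<in> fst G1 \<and> e = {x,y}" using union.IH by metis
      then show ?thesis by blast
    next
      assume "e \<in> snd G2"
      then obtain x y where "x \<noteq> y \<and> x \<in> fst G2 \<and> y \<in> fst G2 \<and> e = {x,y}" using union.IH by metis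
      then show ?thesis by blast
    qed
  qed (use union.IH in auto)
next
  case (join G1 G2)
  show ?case unfolding gjoin_def fst_conv snd_conv
  proof (intro conjI ballI)
    fix e assume "e \<in> snd G1 \<union> snd G2 \<union> {{x, y} |x y. x \<in> fst G1 \<and> y \<in> fst G2}"
    then consider "e \<in> snd G1" | "e \<in> snd G2" | "e \<in> {{x, y} |x y. x \<in> fst G1 \<and> y \<in> fst G2}" by blast
    then show "\<exists>x y. x \<noteq> y \<and> x \<in> fst G1 \<union> fst G2 \<and> y \<in> fst G1 \<union> fst G2 \<and> e = {x,y}"
    proof cases
      case 1
      then obtain x y where "x \<noteq> y \<and> x \<in> fst G1 \<and> y \<in> fst G1 \<and> e = {x,y}" using join.IH by metis
      then show ?thesis by blast
    next
      case 2
      then obtain x y where "x \<noteq> y \<and> x \<in> fst G2 \<and> y \<in> fst G2 \<and> e = {x,y}" using join.IH by metis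
      then show ?thesis by blast
    next
      case 3
      then obtain x y where "e = {x,y}" "x \<in> fst G1" "y \<in> fst G2" by blast
      moreover then have "x \<noteq> y" using join.hyps(3) by blast
      ultimately show ?thesis by blast
    qed
  qed (use join.IH in auto)
qed

lemma leafset_finite_ne: "finite (leafset T) \<and> leafset T \<noteq> {}"
  by (induction T) auto

lemma cotree_ok_lift:
  "cotree_ok (induced_edges E W) T \<Longrightarrow> leafset T \<subseteq> W \<Longrightarrow> cotree_ok E T"
proof (induction T)
  case (BLeaf x)
  then show ?case by simp
next
  case (BNode b l r)
  have *: "\<And>S. S \<subseteq> W \<Longrightarrow> induced_edges (induced_edges E W) S = induced_edges E S"
    by (rule induced_induced)
  have s: "leafset l \<subseteq> W" "leafset r \<subseteq> W" using BNode.prems(2) by auto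
  show ?case using BNode.prems BNode.IH s
    by (simp add: *[OF s(1)] *[OF s(2)] *[of "leafset l \<union> leafset r"] del: induced_induced)
qed



lemma cross_two: "L \<inter> R = {} \<Longrightarrow> L \<noteq> {} \<Longrightarrow> cross_edges {L,R} = {{x,y} |x y. x \<in> L \<and> y \<in> R}"
  unfolding cross_edges_def by (auto simp: insert_commute)

lemma partition_two: "L \<inter> R = {} \<Longrightarrow> L \<noteq> {} \<Longrightarrow> R \<noteq> {} \<Longrightarrow> partition_on (L \<union> R) {L,R}"
  unfolding partition_on_def disjoint_def by auto

lemma hc_cm:
  fixes \<sigma> :: "'a \<Rightarrow> 'c"
  assumes edges: "\<forall>e\<in>E. \<exists>x y. x \<noteq> y \<and> e = {x,y}"
  shows "cotree_ok E T \<Longrightarrow> hc_wrt T \<sigma> \<Longrightarrow> proper_coloring (leafset T, induced_edges E (leafset T)) \<sigma>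
     \<Longrightarrow> color_minimal (leafset T, induced_edges E (leafset T)) \<sigma>"
proof (induction T)
  case (BLeaf v)
  have e: "induced_edges E {v} = {}" using edges unfolding induced_edges_def by fastforce
  have p: "proper_coloring ({v}, {}) \<sigma>" unfolding proper_coloring_def by auto
  have "chi ({v}, {}) \<le> 1" using chi_le_card[OF _ p] by simp
  moreover have "chi ({v}, {}) > 0" using chi_pos[OF _ p] by simp
  ultimately have "chi ({v}, {}) = 1" by simp
  then show ?case using p e by (auto intro: color_minimal.cm_K1)
next
  case (BNode b l r)
  define L where "L = leafset l"
  define R where "R = leafset r"
  define E' where "E' = induced_edges E (L \<union> R)"
  have dis: "L \<inter> R = {}" and eq: "E' = (if b then induced_edges E L \<union> induced_edges E R
                  \<union> {{x, y} | x y. x \<in> L \<and> y \<in> R} else induced_edges E L \<union> induced_edges E R)"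
    using BNode.prems(1) unfolding L_def R_def E'_def by auto
  have okl: "cotree_ok E l" "cotree_ok E r" using BNode.prems(1) by auto
  have hcl: "hc_wrt l \<sigma>" "hc_wrt r \<sigma>" using BNode.prems(2) by auto
  have hcb: "if b then \<sigma> ` L \<inter> \<sigma> ` R = {} else \<sigma> ` L \<subseteq> \<sigma> ` R \<or> \<sigma> ` R \<subseteq> \<sigma> ` L"
    using BNode.prems(2) unfolding L_def R_def by simp
  have fin: "finite L" "finite R" "L \<noteq> {}" "R \<noteq> {}" using leafset_finite_ne unfolding L_def R_def by auto
  have p: "proper_coloring (L \<union> R, E') \<sigma>" using BNode.prems(3) unfolding L_def R_def E'_def by simp
  have iL: "induced_edges E' L = induced_edges E L" and iR: "induced_edges E' R = induced_edges E R"
    unfolding E'_def induced_edges_def by auto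
  have pL: "proper_coloring (L, induced_edges E L) \<sigma>" using proper_restrict[OF p, of L] iL by auto
  have pR: "proper_coloring (R, induced_edges E R) \<sigma>" using proper_restrict[OF p, of R] iR by auto
  have cmL: "color_minimal (L, induced_edges E L) \<sigma>" using BNode.IH(1)[OF okl(1) hcl(1)] pL unfolding L_def by simp
  have cmR: "color_minimal (R, induced_edges E R) \<sigma>" using BNode.IH(2)[OF okl(2) hcl(2)] pR unfolding R_def by simp
  have cL: "card (\<sigma> ` L) = chi (L, induced_edges E L)" using cm_card[OF cmL] by simp
  have cR: "card (\<sigma> ` R) = chi (R, induced_edges E R)" using cm_card[OF cmR] by simp
  have part: "partition_on (L \<union> R) {L,R}" using partition_two dis fin by blast
  have LR: "L \<noteq> R" using dis fin by auto
  have c2: "card {L,R} \<ge> 2" using LR by simp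
  have allcm: "\<forall>W\<in>{L,R}. color_minimal (W, induced_edges E' W) \<sigma>" using cmL cmR iL iR by auto
  have finV: "finite (L \<union> R)" using fin by auto
  have chile: "chi (L \<union> R, E') \<le> card (\<sigma> ` (L \<union> R))" using chi_le_card[OF finV p] .
  have monoL: "chi (L, induced_edges E L) \<le> chi (L \<union> R, E')" using chi_mono[OF finV p, of L] iL by auto
  have monoR: "chi (R, induced_edges E R) \<le> chi (L \<union> R, E')" using chi_mono[OF finV p, of R] iR by auto
  show ?case
  proof (cases b)
    case True
    have E'eq: "E' = (\<Union>W\<in>{L,R}. induced_edges E' W) \<union> cross_edges {L,R}"
      using eq True iL iR cross_two[OF dis fin(3)] by auto
    have d: "\<sigma> ` L \<inter> \<sigma> ` R = {}" using hcb True by simp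
    have card_eq: "card (\<sigma> ` (L \<union> R)) = card (\<sigma> ` L) + card (\<sigma> ` R)"
      using d fin by (simp add: image_Un card_Un_disjoint)
    obtain f :: "'a \<Rightarrow> nat" where f: "proper_coloring (L \<union> R, E') f" "f ` (L \<union> R) \<subseteq> {..<chi (L \<union> R, E')}"
      using chi_opt[OF finV p] by blast
    have fd: "f ` L \<inter> f ` R = {}"
    proof (rule ccontr)
      assume "f ` L \<inter> f ` R \<noteq> {}"
      then obtain x y where xy: "x \<in> L" "y \<in> R" "f x = f y" by auto
      have "{x,y} \<in> E'" using eq True xy by auto
      then show False using f(1) xy unfolding proper_coloring_def by auto
    qed
    have "card (f ` (L \<union> R)) \<le> chi (L \<union> R, E')"
      using card_mono[OF _ f(2)] by simp
    moreover have "card (f ` (L \<union> R)) = card (f ` L) + card (f ` R)"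
      using fd fin by (simp add: image_Un card_Un_disjoint)
    moreover have "chi (L, induced_edges E L) \<le> card (f ` L)"
      using chi_le_card[OF fin(1) proper_restrict[OF f(1), of L]] iL by auto
    moreover have "chi (R, induced_edges E R) \<le> card (f ` R)"
      using chi_le_card[OF fin(2) proper_restrict[OF f(1), of R]] iR by auto
    ultimately have "card (\<sigma> ` (L \<union> R)) = chi (L \<union> R, E')"
      using chile card_eq cL cR by linarith
    then have "color_minimal (L \<union> R, E') \<sigma>"
      using color_minimal.cm_join[OF p _ part _ c2 E'eq allcm] by simp
    then show ?thesis unfolding L_def R_def E'_def by simp
  next
    case False
    have E'eq: "E' = (\<Union>W\<in>{L,R}. induced_edges E' W)"
      using eq False iL iR by auto
    have "card (\<sigma> ` (L \<union> R)) = chi (L \<union> R, E')"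
    proof (cases "\<sigma> ` L \<subseteq> \<sigma> ` R")
      case True
      then have "\<sigma> ` (L \<union> R) = \<sigma> ` R" by auto
      then show ?thesis using chile monoR cR by simp
    next
      case F: False
      then have "\<sigma> ` R \<subseteq> \<sigma> ` L" using hcb False by simp
      then have "\<sigma> ` (L \<union> R) = \<sigma> ` L" by auto
      then show ?thesis using chile monoL cL by simp
    qed
    then have "color_minimal (L \<union> R, E') \<sigma>"
      using color_minimal.cm_union[OF p _ part _ c2 E'eq allcm] by simp
    then show ?thesis unfolding L_def R_def E'_def by simp
  qed
qed


definition node_ok :: "'a set set \<Rightarrow> ('a \<Rightarrow> 'c) \<Rightarrow> bool \<Rightarrow> 'a set \<Rightarrow> 'a set \<Rightarrow> bool" where
  "node_ok E \<sigma> b A W \<longleftrightarrow> A \<inter> W = {} \<and>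
       induced_edges E (A \<union> W) =
         (if b then induced_edges E A \<union> induced_edges E W \<union> {{x, y} | x y. x \<in> A \<and> y \<in> W}
          else induced_edges E A \<union> induced_edges E W) \<and>
       (if b then \<sigma> ` A \<inter> \<sigma> ` W = {} else \<sigma> ` A \<subseteq> \<sigma> ` W \<or> \<sigma> ` W \<subseteq> \<sigma> ` A)"

lemma node_ok_BNode:
  "cotree_ok E T1 \<Longrightarrow> cotree_ok E T2 \<Longrightarrow> hc_wrt T1 \<sigma> \<Longrightarrow> hc_wrt T2 \<sigma> \<Longrightarrow>
   node_ok E \<sigma> b (leafset T1) (leafset T2) \<Longrightarrow> cotree_ok E (BNode b T1 T2) \<and> hc_wrt (BNode b T1 T2) \<sigma>"
  unfolding node_ok_def by simp

lemma chain:
  assumes "finite Q"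
  shows "W0 \<notin> Q \<Longrightarrow> (\<forall>W\<in>insert W0 Q. \<exists>T. leafset T = W \<and> cotree_ok E T \<and> hc_wrt T \<sigma>) \<Longrightarrow>
    (\<forall>Q'\<subseteq>Q. \<forall>W\<in>Q-Q'. node_ok E \<sigma> b (W0 \<union> \<Union>Q') W) \<Longrightarrow>
    \<exists>T. leafset T = W0 \<union> \<Union>Q \<and> cotree_ok E T \<and> hc_wrt T \<sigma>"
  using assms
proof (induction Q rule: finite_induct)
  case empty
  then show ?case by simp
next
  case (insert W Q)
  have a1: "W0 \<notin> Q" using insert.prems(1) by simp
  have a2: "\<forall>W\<in>insert W0 Q. \<exists>T. leafset T = W \<and> cotree_ok E T \<and> hc_wrt T \<sigma>"
    using insert.prems(2) by simp
  have a3: "\<forall>Q'\<subseteq>Q. \<forall>W\<in>Q-Q'. node_ok E \<sigma> b (W0 \<union> \<Union>Q') W"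
  proof (intro allI impI ballI)
    fix Q' W' assume "Q' \<subseteq> Q" "W' \<in> Q - Q'"
    then show "node_ok E \<sigma> b (W0 \<union> \<Union>Q') W'" using insert.prems(3) by auto
  qed
  obtain T1 where T1: "leafset T1 = W0 \<union> \<Union>Q" "cotree_ok E T1" "hc_wrt T1 \<sigma>"
    using insert.IH[OF a1 a2 a3] by blast
  obtain T2 where T2: "leafset T2 = W" "cotree_ok E T2" "hc_wrt T2 \<sigma>" using insert.prems(2) by blast
  have st: "node_ok E \<sigma> b (W0 \<union> \<Union>Q) W"
  proof -
    have "Q \<subseteq> insert W Q" "W \<in> insert W Q - Q" using insert.hyps(2) by auto
    then show ?thesis using insert.prems(3) by blast
  qed
  have "leafset (BNode b T1 T2) = W0 \<union> \<Union>(insert W Q)" using T1 T2 by auto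
  moreover have "cotree_ok E (BNode b T1 T2) \<and> hc_wrt (BNode b T1 T2) \<sigma>"
  proof -
    have "node_ok E \<sigma> b (leafset T1) (leafset T2)" using st T1(1) T2(1) by simp
    then show ?thesis using node_ok_BNode[OF T1(2) T2(2) T1(3) T2(3)] by blast
  qed
  ultimately show ?case by blast
qed

lemma part_unique: "partition_on V P \<Longrightarrow> W \<in> P \<Longrightarrow> W' \<in> P \<Longrightarrow> x \<in> W \<Longrightarrow> x \<in> W' \<Longrightarrow> W = W'"
  using partition_onD2 disjointD by blast

lemma union_node:
  assumes part: "partition_on V P" and E: "E = (\<Union>W\<in>P. induced_edges E W)"
    and Q1: "Q1 \<subseteq> P" and W: "W \<in> P" "W \<notin> Q1"
  shows "\<Union>Q1 \<inter> W = {} \<and> induced_edges E (\<Union>Q1 \<union> W) = induced_edges E (\<Union>Q1) \<union> induced_edges E W"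
proof (intro conjI)
  show "\<Union>Q1 \<inter> W = {}" using part_unique[OF part] Q1 W by blast
  show "induced_edges E (\<Union>Q1 \<union> W) = induced_edges E (\<Union>Q1) \<union> induced_edges E W"
  proof
    show "induced_edges E (\<Union>Q1 \<union> W) \<subseteq> induced_edges E (\<Union>Q1) \<union> induced_edges E W"
    proof
      fix e assume e: "e \<in> induced_edges E (\<Union>Q1 \<union> W)"
      then have eE: "e \<in> E" and es: "e \<subseteq> \<Union>Q1 \<union> W" unfolding induced_edges_def by auto
      then obtain W' where W': "W' \<in> P" "e \<subseteq> W'" using E unfolding induced_edges_def by blast
      show "e \<in> induced_edges E (\<Union>Q1) \<union> induced_edges E W"
      proof (cases "e \<inter> W = {}")
        case True
        then have "e \<subseteq> \<Union>Q1" using es by blast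
        then show ?thesis using eE unfolding induced_edges_def by blast
      next
        case False
        then obtain z where "z \<in> e" "z \<in> W" by blast
        then have "W' = W" using part_unique[OF part W'(1) W(1)] W'(2) by blast
        then show ?thesis using eE W' unfolding induced_edges_def by blast
      qed
    qed
  qed (auto simp: induced_edges_def)
qed

lemma join_node:
  assumes part: "partition_on V P" and E: "E = (\<Union>W\<in>P. induced_edges E W) \<union> cross_edges P"
    and Q1: "Q1 \<subseteq> P" and W: "W \<in> P" "W \<notin> Q1"
  shows "\<Union>Q1 \<inter> W = {} \<and> induced_edges E (\<Union>Q1 \<union> W) = induced_edges E (\<Union>Q1) \<union> induced_edges E W
     \<union> {{x, y} | x y. x \<in> \<Union>Q1 \<and> y \<in> W}"
proof (intro conjI)
  show dis: "\<Union>Q1 \<inter> W = {}" using part_unique[OF part] Q1 W by blast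
  have cr: "{x,y} \<in> E" if xA: "x \<in> \<Union>Q1" and yW: "y \<in> W" for x y
  proof -
    obtain W1 where W1: "W1 \<in> Q1" "x \<in> W1" using xA by blast
    have "W1 \<noteq> W" using W W1 by blast
    then have "{x,y} \<in> cross_edges P" unfolding cross_edges_def using Q1 W W1 yW by blast
    then show ?thesis using E by blast
  qed
  show "induced_edges E (\<Union>Q1 \<union> W) = induced_edges E (\<Union>Q1) \<union> induced_edges E W
     \<union> {{x, y} | x y. x \<in> \<Union>Q1 \<and> y \<in> W}"
  proof
    show "induced_edges E (\<Union>Q1 \<union> W) \<subseteq> induced_edges E (\<Union>Q1) \<union> induced_edges E W
     \<union> {{x, y} | x y. x \<in> \<Union>Q1 \<and> y \<in> W}"
    proof
      fix e assume e: "e \<in> induced_edges E (\<Union>Q1 \<union> W)"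
      then have eE: "e \<in> E" and es: "e \<subseteq> \<Union>Q1 \<union> W" unfolding induced_edges_def by auto
      then consider W' where "W' \<in> P" "e \<subseteq> W'" | "e \<in> cross_edges P" using E unfolding induced_edges_def by blast
      then show "e \<in> induced_edges E (\<Union>Q1) \<union> induced_edges E W \<union> {{x, y} | x y. x \<in> \<Union>Q1 \<and> y \<in> W}"
      proof cases
        case (1 W')
        show ?thesis
        proof (cases "e \<inter> W = {}")
          case True
          then have "e \<subseteq> \<Union>Q1" using es by blast
          then show ?thesis using eE unfolding induced_edges_def by blast
        next
          case False
          then obtain z where "z \<in> e" "z \<in> W" by blast
          then have "W' = W" using part_unique[OF part 1(1) W(1)] 1(2) by blast
          then show ?thesis using eE 1 unfolding induced_edges_def by blast
        qed
      next
        case 2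
        then obtain x y W1 W2 where xy: "e = {x,y}" "W1 \<in> P" "W2 \<in> P" "W1 \<noteq> W2" "x \<in> W1" "y \<in> W2"
          unfolding cross_edges_def by blast
        have "x \<in> \<Union>Q1 \<union> W" "y \<in> \<Union>Q1 \<union> W" using es xy by auto
        moreover have "\<not> (x \<in> W \<and> y \<in> W)" using part_unique[OF part] xy W by metis
        ultimately consider "x \<in> \<Union>Q1" "y \<in> \<Union>Q1" | "x \<in> \<Union>Q1" "y \<in> W" | "x \<in> W" "y \<in> \<Union>Q1" by blast
        then show ?thesis
        proof cases
          case 1
          then show ?thesis using eE xy unfolding induced_edges_def by blast
        next
          case 2
          then show ?thesis using xy by blast
        next
          case 3
          then have "e = {y,x}" using xy by (simp add: insert_commute)
          then show ?thesis using 3 by blast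
        qed
      qed
    qed
    show "induced_edges E (\<Union>Q1) \<union> induced_edges E W \<union> {{x, y} | x y. x \<in> \<Union>Q1 \<and> y \<in> W}
      \<subseteq> induced_edges E (\<Union>Q1 \<union> W)"
      using cr unfolding induced_edges_def by blast
  qed
qed



lemma glue:
  fixes \<sigma> :: "'a \<Rightarrow> 'c"
  assumes part: "partition_on V P" and finP: "finite P" "P \<noteq> {}"
    and E: "E = (\<Union>W\<in>P. induced_edges E W)"
    and pw: "\<forall>W\<in>P. finite W \<and> proper_coloring (W, induced_edges E W) \<sigma>"
  shows "\<exists>Wj\<in>P. chi (V,E) \<le> chi (Wj, induced_edges E Wj)"
proof -
  have "\<forall>W\<in>P. \<exists>f::'a\<Rightarrow>nat. proper_coloring (W, induced_edges E W) f \<and> f ` W \<subseteq> {..<chi (W, induced_edges E W)}"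
    using chi_opt pw by blast
  then obtain F where F: "\<forall>W\<in>P. proper_coloring (W, induced_edges E W) (F W) \<and> F W ` W \<subseteq> {..<chi (W, induced_edges E W)}"
    by (rule bchoice[elim_format]) blast
  define m where "m = Max ((\<lambda>W. chi (W, induced_edges E W)) ` P)"
  have "m \<in> (\<lambda>W. chi (W, induced_edges E W)) ` P"
    unfolding m_def using finP by (intro Max_in) auto
  then obtain Wj where Wj: "Wj \<in> P" "m = chi (Wj, induced_edges E Wj)" by blast
  define pt where "pt x = (SOME W. W \<in> P \<and> x \<in> W)" for x
  have pt: "pt x = W" if "x \<in> W" "W \<in> P" for x W
  proof -
    have "pt x \<in> P \<and> x \<in> pt x" unfolding pt_def by (rule someI[of _ W]) (use that in blast)
    then show ?thesis using part_unique[OF part] that by blast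
  qed
  define g where "g x = F (pt x) x" for x
  have "proper_coloring (V,E) g"
    unfolding proper_coloring_def
  proof (intro ballI impI)
    fix x y assume xy: "x \<in> fst (V,E)" "y \<in> fst (V,E)" "{x,y} \<in> snd (V,E)"
    then obtain W where W: "W \<in> P" "{x,y} \<in> induced_edges E W" using E by auto
    then have xyW: "x \<in> W" "y \<in> W" unfolding induced_edges_def by auto
    have "F W x \<noteq> F W y" using F W xyW unfolding proper_coloring_def by auto
    then show "g x \<noteq> g y" unfolding g_def using pt[OF xyW(1) W(1)] pt[OF xyW(2) W(1)] by simp
  qed
  moreover have "g ` V \<subseteq> {..<m}"
  proof
    fix z assume "z \<in> g ` V"
    then obtain x where x: "x \<in> V" "z = g x" by blast
    then obtain W where W: "W \<in> P" "x \<in> W" using partition_onD1[OF part] by blast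
    have "g x < chi (W, induced_edges E W)" unfolding g_def pt[OF W(2) W(1)] using F W by blast
    also have "\<dots> \<le> m" unfolding m_def using finP W by simp
    finally show "z \<in> {..<m}" using x by simp
  qed
  ultimately have "chi (V,E) \<le> m" unfolding chi_def by (auto intro: Least_le)
  then show ?thesis using Wj by blast
qed


lemma cm_hc:
  "color_minimal G \<sigma> \<Longrightarrow> finite (fst G) \<and> fst G \<noteq> {} \<and>
     (\<exists>T. leafset T = fst G \<and> cotree_ok (snd G) T \<and> hc_wrt T \<sigma>)"
proof (induction rule: color_minimal.induct)
  case (cm_K1 V E \<sigma> v)
  have "leafset (BLeaf v) = V" "cotree_ok E (BLeaf v)" "hc_wrt (BLeaf v) \<sigma>" using cm_K1(3) by simp_all
  moreover have "finite V" "V \<noteq> {}" using cm_K1(3) by simp_all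
  ultimately show ?case unfolding fst_conv snd_conv by blast
next
  case (cm_union V E \<sigma> P)
  have IH: "\<forall>W\<in>P. color_minimal (W, induced_edges E W) \<sigma> \<and> finite W \<and> W \<noteq> {} \<and>
     (\<exists>T. leafset T = W \<and> cotree_ok (induced_edges E W) T \<and> hc_wrt T \<sigma>)"
    using cm_union(7) by simp
  have trees: "\<forall>W\<in>P. \<exists>T. leafset T = W \<and> cotree_ok E T \<and> hc_wrt T \<sigma>"
  proof
    fix W assume "W \<in> P"
    then obtain T where "leafset T = W" "cotree_ok (induced_edges E W) T" "hc_wrt T \<sigma>" using IH by blast
    then show "\<exists>T. leafset T = W \<and> cotree_ok E T \<and> hc_wrt T \<sigma>" using cotree_ok_lift by blast
  qed
  have Vu: "V = \<Union>P" using partition_onD1[OF cm_union(3)] .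
  have fW: "\<forall>W\<in>P. finite W \<and> W \<noteq> {}" using IH by blast
  have finV: "finite V" unfolding Vu using cm_union(4) fW by (intro finite_Union) auto
  have Pne: "P \<noteq> {}" using cm_union(5) by (metis card.empty not_numeral_le_zero)
  have Vne: "V \<noteq> {}" using Vu Pne fW by blast
  have pw: "\<forall>W\<in>P. finite W \<and> proper_coloring (W, induced_edges E W) \<sigma>"
  proof
    fix W assume W: "W \<in> P"
    then have "color_minimal (W, induced_edges E W) \<sigma>" "finite W" using IH by blast+
    then show "finite W \<and> proper_coloring (W, induced_edges E W) \<sigma>" using cm_card by fastforce
  qed
  obtain Wj where Wj: "Wj \<in> P" "chi (V,E) \<le> chi (Wj, induced_edges E Wj)"
    using glue[OF cm_union(3) cm_union(4) Pne cm_union(6) pw] by blast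
  have "color_minimal (Wj, induced_edges E Wj) \<sigma>" using IH Wj(1) by blast
  then have cWj: "card (\<sigma> ` Wj) = chi (Wj, induced_edges E Wj)" using cm_card by fastforce
  have sub: "\<sigma> ` Wj \<subseteq> \<sigma> ` V" using Vu Wj(1) by blast
  have eqWj: "\<sigma> ` Wj = \<sigma> ` V"
    using card_seteq[OF finite_imageI[OF finV] sub] cWj Wj(2) cm_union(2) by simp
  have allsub: "\<forall>W\<in>P. \<sigma> ` W \<subseteq> \<sigma> ` Wj" using eqWj Vu by blast
  have step: "\<forall>Q'\<subseteq>P - {Wj}. \<forall>W\<in>(P - {Wj})-Q'. node_ok E \<sigma> False (Wj \<union> \<Union>Q') W"
  proof (intro allI impI ballI)
    fix Q' W assume Q': "Q' \<subseteq> P - {Wj}" and W: "W \<in> (P - {Wj}) - Q'"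
    have un: "\<Union>(insert Wj Q') = Wj \<union> \<Union>Q'" by simp
    have "\<Union>(insert Wj Q') \<inter> W = {} \<and> induced_edges E (\<Union>(insert Wj Q') \<union> W) =
       induced_edges E (\<Union>(insert Wj Q')) \<union> induced_edges E W"
      by (rule union_node[OF cm_union(3) cm_union(6)]) (use Q' W Wj(1) in auto)
    moreover have "\<sigma> ` W \<subseteq> \<sigma> ` (Wj \<union> \<Union>Q')" using allsub W by blast
    ultimately show "node_ok E \<sigma> False (Wj \<union> \<Union>Q') W" unfolding node_ok_def un by simp
  qed
  have fQ: "finite (P - {Wj})" using cm_union(4) by simp
  have nQ: "Wj \<notin> P - {Wj}" by simp
  have trees': "\<forall>W\<in>insert Wj (P - {Wj}). \<exists>T. leafset T = W \<and> cotree_ok E T \<and> hc_wrt T \<sigma>"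
    using trees insert_Diff[OF Wj(1)] by simp
  obtain T where T: "leafset T = Wj \<union> \<Union>(P - {Wj})" "cotree_ok E T" "hc_wrt T \<sigma>"
    using chain[OF fQ nQ trees' step] by blast
  have "Wj \<union> \<Union>(P - {Wj}) = V" using Vu Wj(1) by blast
  then show ?case using finV Vne T by auto
next
  case (cm_join V E \<sigma> P)
  have IH: "\<forall>W\<in>P. color_minimal (W, induced_edges E W) \<sigma> \<and> finite W \<and> W \<noteq> {} \<and>
     (\<exists>T. leafset T = W \<and> cotree_ok (induced_edges E W) T \<and> hc_wrt T \<sigma>)"
    using cm_join(7) by simp
  have trees: "\<forall>W\<in>P. \<exists>T. leafset T = W \<and> cotree_ok E T \<and> hc_wrt T \<sigma>"
  proof
    fix W assume "W \<in> P"
    then obtain T where "leafset T = W" "cotree_ok (induced_edges E W) T" "hc_wrt T \<sigma>" using IH by blast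
    then show "\<exists>T. leafset T = W \<and> cotree_ok E T \<and> hc_wrt T \<sigma>" using cotree_ok_lift by blast
  qed
  have Vu: "V = \<Union>P" using partition_onD1[OF cm_join(3)] .
  have fW: "\<forall>W\<in>P. finite W \<and> W \<noteq> {}" using IH by blast
  have finV: "finite V" unfolding Vu using cm_join(4) fW by (intro finite_Union) auto
  have Pne: "P \<noteq> {}" using cm_join(5) by (metis card.empty not_numeral_le_zero)
  have Vne: "V \<noteq> {}" using Vu Pne fW by blast
  obtain Wj where Wj: "Wj \<in> P" using Pne by blast
  have step: "\<forall>Q'\<subseteq>P - {Wj}. \<forall>W\<in>(P - {Wj})-Q'. node_ok E \<sigma> True (Wj \<union> \<Union>Q') W"
  proof (intro allI impI ballI)
    fix Q' W assume Q': "Q' \<subseteq> P - {Wj}" and W: "W \<in> (P - {Wj}) - Q'"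
    have un: "\<Union>(insert Wj Q') = Wj \<union> \<Union>Q'" by simp
    have nd: "\<Union>(insert Wj Q') \<inter> W = {} \<and> induced_edges E (\<Union>(insert Wj Q') \<union> W) =
       induced_edges E (\<Union>(insert Wj Q')) \<union> induced_edges E W \<union> {{x, y} | x y. x \<in> \<Union>(insert Wj Q') \<and> y \<in> W}"
      by (rule join_node[OF cm_join(3) cm_join(6)]) (use Q' W Wj(1) in auto)
    have "\<sigma> ` (Wj \<union> \<Union>Q') \<inter> \<sigma> ` W = {}"
    proof (rule ccontr)
      assume "\<sigma> ` (Wj \<union> \<Union>Q') \<inter> \<sigma> ` W \<noteq> {}"
      then obtain x y where xy: "x \<in> Wj \<union> \<Union>Q'" "y \<in> W" "\<sigma> x = \<sigma> y" by auto
      have eqn: "induced_edges E (\<Union>(insert Wj Q') \<union> W) =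
       induced_edges E (\<Union>(insert Wj Q')) \<union> induced_edges E W \<union> {{x, y} | x y. x \<in> \<Union>(insert Wj Q') \<and> y \<in> W}"
        using nd by (rule conjunct2)
      have m: "{x,y} \<in> {{a, b} | a b. a \<in> \<Union>(insert Wj Q') \<and> b \<in> W}" using xy(1,2) un by blast
      have "{x,y} \<in> induced_edges E (\<Union>(insert Wj Q') \<union> W)" by (subst eqn) (rule UnI2[OF m])
      then have "{x,y} \<in> E" unfolding induced_edges_def by blast
      moreover have "x \<in> V" "y \<in> V" using xy Vu Q' W Wj(1) by blast+
      ultimately show False using cm_join(1) xy(3) unfolding proper_coloring_def by auto
    qed
    then show "node_ok E \<sigma> True (Wj \<union> \<Union>Q') W" using nd unfolding node_ok_def un by simp
  qed
  have fQ: "finite (P - {Wj})" using cm_join(4) by simp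
  have nQ: "Wj \<notin> P - {Wj}" by simp
  have trees': "\<forall>W\<in>insert Wj (P - {Wj}). \<exists>T. leafset T = W \<and> cotree_ok E T \<and> hc_wrt T \<sigma>"
    using trees insert_Diff[OF Wj(1)] by simp
  obtain T where T: "leafset T = Wj \<union> \<Union>(P - {Wj})" "cotree_ok E T" "hc_wrt T \<sigma>"
    using chain[OF fQ nQ trees' step] by blast
  have "Wj \<union> \<Union>(P - {Wj}) = V" using Vu Wj(1) by blast
  then show ?case using finV Vne T by auto
qed

theorem theorem9:
  fixes G :: "'a graph" and \<sigma> :: "'a \<Rightarrow> 'c"
  assumes "cograph G" and "proper_coloring G \<sigma>"
  shows "recursively_minimal G \<sigma> \<longleftrightarrow> hc_coloring G \<sigma>"
proof -
  obtain V E where G: "G = (V,E)" by (cases G)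
  have cp: "finite V \<and> V \<noteq> {} \<and> (\<forall>e\<in>E. \<exists>x y. x \<noteq> y \<and> x \<in> V \<and> y \<in> V \<and> e = {x,y})"
    using cograph_props[OF assms(1)] unfolding G fst_conv snd_conv .
  have cg2: "\<forall>e\<in>E. \<exists>x y. x \<noteq> y \<and> x \<in> V \<and> y \<in> V \<and> e = {x,y}"
    using cp by (elim conjE)
  have EV: "induced_edges E V = E"
  proof
    show "induced_edges E V \<subseteq> E" unfolding induced_edges_def by (rule subsetI) simp
    show "E \<subseteq> induced_edges E V"
    proof
      fix e assume e: "e \<in> E"
      then obtain x y where "x \<in> V" "y \<in> V" "e = {x,y}" using cg2 by meson
      then show "e \<in> induced_edges E V" using e unfolding induced_edges_def by simp
    qed
  qed
  have edges: "\<forall>e\<in>E. \<exists>x y. x \<noteq> y \<and> e = {x,y}"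
  proof
    fix e assume "e \<in> E"
    then obtain x y where "x \<noteq> y" "e = {x,y}" using cg2 by meson
    then show "\<exists>x y. x \<noteq> y \<and> e = {x,y}" by blast
  qed
  show ?thesis
  proof
    assume "recursively_minimal G \<sigma>"
    then have "color_minimal G \<sigma>" unfolding recursively_minimal_def .
    from cm_hc[OF this] obtain T where "leafset T = fst G" "cotree_ok (snd G) T" "hc_wrt T \<sigma>" by blast
    then show "hc_coloring G \<sigma>" unfolding hc_coloring_def binary_cotree_def using assms(2) by blast
  next
    assume "hc_coloring G \<sigma>"
    then obtain T where T: "leafset T = V" "cotree_ok E T" "hc_wrt T \<sigma>"
      unfolding hc_coloring_def binary_cotree_def G fst_conv snd_conv by blast
    have p: "proper_coloring (leafset T, induced_edges E (leafset T)) \<sigma>"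
      using assms(2) unfolding G T(1) EV .
    have "color_minimal (leafset T, induced_edges E (leafset T)) \<sigma>"
      by (rule hc_cm[OF edges T(2) T(3) p])
    then show "recursively_minimal G \<sigma>" unfolding recursively_minimal_def G T(1) EV .
  qed
qed

end
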